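(* Let $n\in\mathbb{N}$ and for $c\in\mathbb{R}$ let $D_{2n}(z;c) = \prod_{j=1}^{2n}[z-(j-1)] + (-1)^n c$, $z\in\mathbb{C}$, with roots $\alpha_1(c),\dots,\alpha_{2n}(c)$ (with multiplicity). Write \[ D_{2n}(z-(1/2);c) = q_{2n}z^{2n}+q_{2n-1}z^{2n-1}+\cdots+q_1 z + [q_0+(-1)^n c], \] so that $q_0 = (4n-1)!!/2^{2n}$. Let $a_k=q_k$ for $1\leq k\leq 2n$, $a_0 = q_0+(-1)^nc$, and $a_k=0$ for $k<0$ or $k>2n$, and let $H_{2n}(c)$ be the $2n\times 2n$ Hurwitz matrix with entries $(H_{2n}(c))_{i,j} = a_{2n-2j+i}$, $1\leq i,j\leq 2n$. Let $h_{n-1}(c)$ be the determinant of the upper-left $(2n-1)\times(2n-1)$ submatrix of $H_{2n}(c)$, so that $\det(H_{2n}(c)) = [q_0+(-1)^nc]\,h_{n-1}(c)$. If $j\in\{1,\dots,2n\}$ and $c\in\mathbb{R}$ are such that $\Re(\alpha_j(c))=-1/2$, then $\det(H_{2n}(c))=0$, that is, $c=(-1)^{n-1}q_0$ or $h_{n-1}(c)=0$.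
   Context: $h_{n-1}$ is a polynomial in $c$ of degree $n-1$ with rational coefficients, and $\det(H_{2n}(\cdot))$ is a polynomial in $c$ of degree $n$. *)

theory Defs
  imports Complex_Main "HOL-Computational_Algebra.Polynomial" "Jordan_Normal_Form.Determinant"
begin

definition Dpoly :: "nat \<Rightarrow> real \<Rightarrow> real poly" where
  "Dpoly n c = (\<Prod>j\<in>{1..2*n}. [:- of_nat (j - 1), 1:]) + [:(-1)^n * c:]"

definition q :: "nat \<Rightarrow> nat \<Rightarrow> real" where
  "q n k = coeff (pcompose (\<Prod>j\<in>{1..2*n}. [:- of_nat (j - 1), 1:]) [:-1/2, 1::real:]) k"

definition a :: "nat \<Rightarrow> real \<Rightarrow> int \<Rightarrow> real" where
  "a n c k = (if k = 0 then q n 0 + (-1)^n * c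
              else if 1 \<le> k \<and> k \<le> 2 * int n then q n (nat k) else 0)"

text \<open>Hurwitz matrix H_{2n}(c), (H)_{i,j} = a_{2n-2j+i} for 1 \<le> i,j \<le> 2n;
  here indices are 0-based, so entry (i,j) is a_{2n-2(j+1)+(i+1)}.\<close>
definition hurwitz :: "nat \<Rightarrow> real \<Rightarrow> real mat" where
  "hurwitz n c = mat (2*n) (2*n)
     (\<lambda>(i,j). a n c (2 * int n - 2 * (int j + 1) + (int i + 1)))"

definition h :: "nat \<Rightarrow> real \<Rightarrow> real" where
  "h n c = det (mat (2*n - 1) (2*n - 1)
     (\<lambda>(i,j). a n c (2 * int n - 2 * (int j + 1) + (int i + 1))))"

end

theory Submission
  imports Defs
begin

lemma shift_sum:
  fixes g :: "int \<Rightarrow> real"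
  assumes g0: "\<And>k. k < 0 \<Longrightarrow> g k = 0" and gK: "\<And>k. k > int K \<Longrightarrow> g k = 0" and tK: "t + K < L"
  shows "(\<Sum>j<L. g (int j - int t) * w^j) = w^t * (\<Sum>m\<le>K. g (int m) * w^m)"
proof -
  have "w^t * (\<Sum>m\<le>K. g (int m) * w^m) = (\<Sum>m\<le>K. g (int (m+t) - int t) * w^(m+t))"
    by (simp add: sum_distrib_left power_add algebra_simps)
  also have "\<dots> = (\<Sum>j\<in>(\<lambda>m. m+t) ` {..K}. g (int j - int t) * w^j)"
    by (subst sum.reindex) (auto simp: inj_on_def)
  also have "\<dots> = (\<Sum>j<L. g (int j - int t) * w^j)"
  proof (rule sum.mono_neutral_left)
    show "(\<lambda>m. m+t) ` {..K} \<subseteq> {..<L}" using tK by auto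
    show "\<forall>j\<in>{..<L} - (\<lambda>m. m+t) ` {..K}. g (int j - int t) * w^j = 0"
    proof
      fix j assume "j \<in> {..<L} - (\<lambda>m. m+t) ` {..K}"
      then have jL: "j \<notin> (\<lambda>m. m+t) ` {..K}" by blast
      have "j < t \<or> j > t + K"
      proof (rule ccontr)
        assume "\<not> (j < t \<or> j > t + K)"
        then have "j \<in> (\<lambda>m. m+t) ` {..K}" by (intro image_eqI[of _ _ "j-t"]) auto
        with jL show False by blast
      qed
      then show "g (int j - int t) * w^j = 0" using g0 gK by auto
    qed
  qed auto
  finally show ?thesis by simp
qed

lemma row_zero:
  fixes r :: "int \<Rightarrow> real"
  assumes r0: "\<And>k. k<0 \<Longrightarrow> r k = 0" and rn: "\<And>k. k > 2*int n \<Longrightarrow> r k = 0"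
    and E: "(\<Sum>m\<le>n. r (2*int m) * w^m) = 0" and O: "(\<Sum>m\<le>n-1. r (2*int m+1) * w^m) = 0"
    and n: "n \<ge> 1" and L: "L = 2*n \<or> L = 2*n-1" and i: "i < L"
  shows "(\<Sum>j<L. r (2*int n - 2*int L + 1 + int i + 2 * int j) * w^j) = 0"
proof -
  define s where "s = 2*int n - 2*int L + 1 + int i"
  show ?thesis
  proof (cases "even s")
    case True
    then obtain k where k: "s = 2*k" by (auto elim: evenE)
    have "s \<le> 1" using L i n unfolding s_def by auto
    then have "k \<le> 0" using k by simp
    define t where "t = nat (-k)"
    have st: "s = - 2 * int t" using k \<open>k \<le> 0\<close> t_def by simp
    have "(\<Sum>j<L. r (s + 2 * int j) * w^j) = (\<Sum>j<L. (\<lambda>k. r (2*k)) (int j - int t) * w^j)"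
      by (rule sum.cong) (auto simp: st algebra_simps)
    also have "\<dots> = w^t * (\<Sum>m\<le>n. r (2*int m) * w^m)"
      by (rule shift_sum) (use r0 rn st L i s_def in auto)
    finally show ?thesis using E s_def by simp
  next
    case False
    then obtain k where k: "s = 2*k+1" by (auto elim: oddE)
    have "s \<le> 1" using L i n unfolding s_def by auto
    then have "k \<le> 0" using k by simp
    define t where "t = nat (-k)"
    have st: "s = 1 - 2 * int t" using k \<open>k \<le> 0\<close> t_def by simp
    have "(\<Sum>j<L. r (s + 2 * int j) * w^j) = (\<Sum>j<L. (\<lambda>k. r (2*k+1)) (int j - int t) * w^j)"
      by (rule sum.cong) (auto simp: st algebra_simps)
    also have "\<dots> = w^t * (\<Sum>m\<le>n-1. r (2*int m+1) * w^m)"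
      by (rule shift_sum) (use r0 rn st L i s_def n in auto)
    finally show ?thesis using O s_def by simp
  qed
qed

lemma det_kernel:
  fixes r :: "int \<Rightarrow> real"
  assumes r0: "\<And>k. k<0 \<Longrightarrow> r k = 0" and rn: "\<And>k. k > 2*int n \<Longrightarrow> r k = 0"
    and E: "(\<Sum>m\<le>n. r (2*int m) * w^m) = 0" and O: "(\<Sum>m\<le>n-1. r (2*int m+1) * w^m) = 0"
    and n: "n \<ge> 1" and L: "L = 2*n \<or> L = 2*n-1"
  shows "det (mat L L (\<lambda>(i,j). r (2 * int n - 2 * (int j + 1) + (int i + 1)))) = 0"
proof -
  define A where "A = mat L L (\<lambda>(i,j). r (2 * int n - 2 * (int j + 1) + (int i + 1)))"
  define v where "v = vec L (\<lambda>j. w^(L-1-j))"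
  have A: "A \<in> carrier_mat L L" unfolding A_def by simp
  have v: "v \<in> carrier_vec L" unfolding v_def by simp
  have L0: "L > 0" using L n by auto
  have "v $ (L-1) = 1" unfolding v_def using L0 by simp
  then have vnz: "v \<noteq> 0\<^sub>v L" using L0 by auto
  have "A *\<^sub>v v = 0\<^sub>v L"
  proof (rule eq_vecI)
    show "dim_vec (A *\<^sub>v v) = dim_vec (0\<^sub>v L)" using A by simp
    fix i assume "i < dim_vec (0\<^sub>v L)"
    then have i: "i < L" by simp
    have "(A *\<^sub>v v) $ i = (\<Sum>j<L. r (2 * int n - 2 * (int j + 1) + (int i + 1)) * w^(L-1-j))"
      using i A v unfolding A_def v_def
      by (simp add: scalar_prod_def lessThan_atLeast0)
    also have "\<dots> = (\<Sum>j=0..<L. r (2 * int n - 2 * (int (L + 0 - Suc j) + 1) + (int i + 1)) * w^(L-1-(L + 0 - Suc j)))"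
      unfolding lessThan_atLeast0 by (rule sum.atLeastLessThan_rev)
    also have "\<dots> = (\<Sum>j<L. r (2*int n - 2*int L + 1 + int i + 2 * int j) * w^j)"
      unfolding lessThan_atLeast0[symmetric]
      by (rule sum.cong) (auto simp: of_nat_diff algebra_simps)
    also have "\<dots> = 0" by (rule row_zero[OF r0 rn E O n L i])
    finally show "(A *\<^sub>v v) $ i = 0\<^sub>v L $ i" using i by simp
  qed
  then have "det A = 0" using det_0_iff_vec_prod_zero[OF A] v vnz by blast
  then show ?thesis unfolding A_def .
qed

lemma ofr_add: "map_poly (of_real :: real \<Rightarrow> complex) (p1 + p2) = map_poly of_real p1 + map_poly of_real p2"
  by (rule poly_eqI) (simp add: coeff_map_poly)

lemma ofr_mult: "map_poly (of_real :: real \<Rightarrow> complex) (p1 * p2) = map_poly of_real p1 * map_poly of_real p2"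
  by (rule poly_eqI) (simp add: coeff_map_poly coeff_mult of_real_sum)

lemma poly_ofr_pcompose:
  "poly (map_poly (of_real :: real \<Rightarrow> complex) (pcompose p p2)) x
   = poly (map_poly of_real p) (poly (map_poly of_real p2) x)"
proof (induction p)
  case 0
  then show ?case by simp
next
  case (pCons b p)
  then show ?case
    by (simp add: pcompose_pCons ofr_add ofr_mult map_poly_pCons)
qed

lemma poly_sum_bound:
  fixes p :: "complex poly"
  assumes "degree p < N"
  shows "poly p x = (\<Sum>i<N. coeff p i * x^i)"
proof -
  have "poly p x = (\<Sum>i\<le>degree p. coeff p i * x^i)" by (rule poly_altdef)
  also have "\<dots> = (\<Sum>i<N. coeff p i * x^i)"
    by (rule sum.mono_neutral_left) (use assms in \<open>auto simp: coeff_eq_0\<close>)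
  finally show ?thesis .
qed

lemma sum_even_odd:
  fixes f :: "nat \<Rightarrow> 'a::comm_monoid_add"
  shows "(\<Sum>k<2*M. f k) = (\<Sum>m<M. f (2*m)) + (\<Sum>m<M. f (2*m+1))"
  by (induction M) (simp_all add: algebra_simps)

theorem lemma4p5:
  fixes n :: nat and c :: real and \<alpha> :: complex
  assumes "n \<ge> 1"
    and "poly (map_poly complex_of_real (Dpoly n c)) \<alpha> = 0"
    and "Re \<alpha> = -1/2"
  shows "det (hurwitz n c) = 0 \<and> (c = (-1)^(n-1) * q n 0 \<or> h n c = 0)"
proof -
  note n = assms(1)
  define P :: "real poly" where "P = (\<Prod>j\<in>{1..2*n}. [:- of_nat (j - 1), 1:])"
  define lin :: "real poly" where "lin = [:-1/2, 1:]"
  define R where "R = pcompose (Dpoly n c) lin"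
  define r where "r = a n c"
  have degP: "degree P \<le> 2*n"
  proof -
    have "degree P \<le> sum (degree \<circ> (\<lambda>j. [:- of_nat (j - 1), 1::real:])) {1..2*n}"
      unfolding P_def by (rule degree_prod_sum_le) simp
    also have "\<dots> = 2*n" by simp
    finally show ?thesis .
  qed
  have Rdef: "R = pcompose P lin + [:(-1)^n * c:]"
    unfolding R_def Dpoly_def P_def by (simp add: pcompose_add)
  have degQ: "degree (pcompose P lin) \<le> 2*n"
    using degP by (simp add: degree_pcompose lin_def)
  have degR: "degree R \<le> 2*n"
    unfolding Rdef using degQ by (intro degree_add_le) auto
  have coeffR: "coeff R k = r (int k)" for k
  proof -
    have qk: "q n k = coeff (pcompose P lin) k" unfolding q_def P_def lin_def by simp
    show ?thesis
    proof (cases "k \<le> 2*n")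
      case True
      then show ?thesis unfolding Rdef r_def a_def using qk by (auto simp: coeff_pCons split: nat.splits)
    next
      case False
      then have "coeff (pcompose P lin) k = 0" using degQ by (intro coeff_eq_0) simp
      then show ?thesis unfolding Rdef r_def a_def using False by (auto simp: coeff_pCons split: nat.splits)
    qed
  qed
  have r0: "\<And>k. k < 0 \<Longrightarrow> r k = 0" and rn: "\<And>k. k > 2*int n \<Longrightarrow> r k = 0"
    unfolding r_def a_def by auto
  define y where "y = Im \<alpha>"
  define x where "x = \<i> * complex_of_real y"
  have root: "poly (map_poly complex_of_real R) x = 0"
  proof -
    have "x - 1/2 = \<alpha>" unfolding x_def y_def using assms(3) by (simp add: complex_eq_iff)
    then show ?thesis using assms(2) unfolding R_def poly_ofr_pcompose lin_def
      by (simp add: map_poly_pCons)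
  qed
  define w where "w = - (y^2)"
  define E where "E = (\<Sum>m<n+1. r (2*int m) * w^m)"
  define Od where "Od = (\<Sum>m<n+1. r (2*int m+1) * w^m)"
  have x2: "x^(2*m) = complex_of_real (w^m)" for m
    unfolding x_def w_def power_mult by (simp add: power_mult_distrib)
  have x2': "x^(2*m+1) = \<i> * complex_of_real y * complex_of_real (w^m)" for m
    using x2[of m] by (simp add: x_def mult_ac)
  have "poly (map_poly complex_of_real R) x = (\<Sum>k<2*(n+1). complex_of_real (r (int k)) * x^k)"
    using degR by (subst poly_sum_bound[where N="2*(n+1)"]) (simp_all add: degree_map_poly coeff_map_poly coeffR)
  also have "\<dots> = (\<Sum>m<n+1. complex_of_real (r (int (2*m))) * x^(2*m)) + (\<Sum>m<n+1. complex_of_real (r (int (2*m+1))) * x^(2*m+1))"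
    by (rule sum_even_odd)
  also have "\<dots> = complex_of_real E + \<i> * complex_of_real (y * Od)"
    unfolding x2 x2' E_def Od_def
    by (simp add: sum_distrib_left of_real_sum mult_ac add_ac distrib_left)
  finally have EO: "complex_of_real E + \<i> * complex_of_real (y * Od) = 0" using root by simp
  have E0: "E = 0" using arg_cong[OF EO, of Re] by simp
  have O0: "y * Od = 0" using arg_cong[OF EO, of Im] by simp
  show ?thesis
  proof (cases "y = 0")
    case True
    then have "x = 0" unfolding x_def by simp
    then have "coeff R 0 = 0" using root by (simp add: poly_0_coeff_0 coeff_map_poly)
    then have a0: "q n 0 + (-1)^n * c = 0" using coeffR[of 0] by (simp add: r_def a_def)
    obtain m where nm: "n = Suc m" using n by (cases n) auto
    have c: "c = (-1)^(n-1) * q n 0" using a0 unfolding nm by (cases "even m") auto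
    have "det (hurwitz n c) = 0"
    proof -
      define H where "H = hurwitz n c"
      have H: "H \<in> carrier_mat (2*n) (2*n)" unfolding H_def hurwitz_def by simp
      have "H *\<^sub>v unit_vec (2*n) (2*n-1) = 0\<^sub>v (2*n)"
      proof (rule eq_vecI)
        show "dim_vec (H *\<^sub>v unit_vec (2*n) (2*n-1)) = dim_vec (0\<^sub>v (2*n))" using H by simp
        fix i assume "i < dim_vec (0\<^sub>v (2*n))"
        then have i: "i < 2*n" by simp
        have "(H *\<^sub>v unit_vec (2*n) (2*n-1)) $ i = H $$ (i, 2*n-1)"
          using i H n by (simp add: scalar_prod_def unit_vec_def lessThan_atLeast0[symmetric] if_distrib cong: if_cong)
        also have "\<dots> = a n c (int i + 1 - 2*int n)"
          unfolding H_def hurwitz_def using i n by (simp add: of_nat_diff) (rule arg_cong[where f="a n c"], simp)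
        also have "\<dots> = 0" using i n a0 unfolding a_def by (auto simp: of_nat_diff)
        finally show "(H *\<^sub>v unit_vec (2*n) (2*n-1)) $ i = 0\<^sub>v (2*n) $ i" using i by simp
      qed
      moreover have "unit_vec (2*n) (2*n-1) \<noteq> 0\<^sub>v (2*n)" using n by simp
      ultimately have "det H = 0" using det_0_iff_vec_prod_zero[OF H] unit_vec_carrier by blast
      then show ?thesis unfolding H_def .
    qed
    then show ?thesis using c by simp
  next
    case False
    then have O0': "Od = 0" using O0 by simp
    have E': "(\<Sum>m\<le>n. r (2*int m) * w^m) = 0" using E0 unfolding E_def by (simp add: lessThan_Suc_atMost)
    have "Od = (\<Sum>m\<le>n-1. r (2*int m+1) * w^m) + r (2 * int n + 1) * w^n"
    proof -
      obtain m0 where nm: "n = Suc m0" using n by (cases n) auto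
      show ?thesis unfolding Od_def nm by (simp add: lessThan_Suc_atMost[symmetric])
    qed
    then have O': "(\<Sum>m\<le>n-1. r (2*int m+1) * w^m) = 0" using O0' rn[of "2 * int n + 1"] by simp
    have "det (hurwitz n c) = 0"
      using det_kernel[OF r0 rn E' O' n, of "2*n"] unfolding hurwitz_def r_def by simp
    moreover have "h n c = 0"
      using det_kernel[OF r0 rn E' O' n, of "2*n-1"] unfolding h_def r_def by simp
    ultimately show ?thesis by simp
  qed
qed

end
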